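(* Let $H$ be a finite-dimensional real Hilbert space and let $A = A_1 + A_2$, where $A_1, A_2: H\to H$ are linear operators with $A_1 = A_2^*$, and $A=A^*>0$. Let $\sigma\ge 1/4$, $\tau>0$, let $y^0,y^1\in H$ be arbitrary and $\varphi^n\in H$. Let $y^{n+1}$, $n\ge1$, be defined by the scheme $$G\,\frac{y^{n+1}-2y^n+y^{n-1}}{\tau^2} + A y^n = \varphi^n,\quad n=1,2,\dots,\qquad G = (E+\sigma\tau^2A_1)(E+\sigma\tau^2A_2).$$ Define $$R = E + \Big(\sigma-\frac14\Big)\tau^2 A + \sigma^2\tau^4 A_1A_2,\qquad \mathcal{E}_{n} = \left\|\frac{y^{n}+y^{n-1}}{2}\right\|_A^2 + \left\|\frac{y^{n}-y^{n-1}}{\tau}\right\|_{R}^2,\quad n\ge1 .$$ Then $R = R^* \ge E$, and for every $n\ge1$, regardless of $\tau$, $$\mathcal{E}_{n+1} \le \exp(\tau)\,\mathcal{E}_n + \exp(0.75\,\tau)\,\tau\,\|\varphi^n\|^2_{R^{-1}} .$$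
   Context: $H$ has scalar product $(\cdot,\cdot)$ and norm $\|y\|=(y,y)^{1/2}$; $A^*$ denotes the adjoint. For a self-adjoint positive definite operator $D$ on $H$, $\|y\|_D = (Dy,y)^{1/2}$; in particular $\|\varphi\|^2_{R^{-1}} = (R^{-1}\varphi,\varphi)$. $E$ denotes the identity operator on $H$, and $D_1\ge D_2$ means $(D_1y,y)\ge(D_2y,y)$ for all $y\in H$. *)

theory Defs
  imports "HOL-Analysis.Analysis"
begin

definition sqnorm_op :: "('a::real_inner \<Rightarrow> 'a) \<Rightarrow> 'a \<Rightarrow> real" where
  "sqnorm_op D y = inner (D y) y"

definition op_ge :: "('a::real_inner \<Rightarrow> 'a) \<Rightarrow> ('a \<Rightarrow> 'a) \<Rightarrow> bool" where
  "op_ge D1 D2 \<longleftrightarrow> (\<forall>y. inner (D1 y) y \<ge> inner (D2 y) y)"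

definition pos_def_op :: "('a::real_inner \<Rightarrow> 'a) \<Rightarrow> bool" where
  "pos_def_op D \<longleftrightarrow> (\<forall>y. y \<noteq> 0 \<longrightarrow> inner (D y) y > 0)"

definition G_op :: "real \<Rightarrow> real \<Rightarrow> ('a::real_vector \<Rightarrow> 'a) \<Rightarrow> ('a \<Rightarrow> 'a) \<Rightarrow> 'a \<Rightarrow> 'a" where
  "G_op \<sigma> \<tau> A1 A2 = (\<lambda>v. let w = v + (\<sigma> * \<tau>^2) *\<^sub>R A2 v in w + (\<sigma> * \<tau>^2) *\<^sub>R A1 w)"

definition R_op :: "real \<Rightarrow> real \<Rightarrow> ('a::real_vector \<Rightarrow> 'a) \<Rightarrow> ('a \<Rightarrow> 'a) \<Rightarrow> 'a \<Rightarrow> 'a" where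
  "R_op \<sigma> \<tau> A1 A2 = (\<lambda>v. v + ((\<sigma> - 1/4) * \<tau>^2) *\<^sub>R (A1 v + A2 v)
                                + (\<sigma>^2 * \<tau>^4) *\<^sub>R A1 (A2 v))"

definition energy :: "real \<Rightarrow> real \<Rightarrow> ('a::real_inner \<Rightarrow> 'a) \<Rightarrow> ('a \<Rightarrow> 'a) \<Rightarrow> (nat \<Rightarrow> 'a) \<Rightarrow> nat \<Rightarrow> real" where
  "energy \<sigma> \<tau> A1 A2 y n =
     sqnorm_op (\<lambda>v. A1 v + A2 v) ((1/2) *\<^sub>R (y n + y (n - 1)))
   + sqnorm_op (R_op \<sigma> \<tau> A1 A2) ((1/\<tau>) *\<^sub>R (y n - y (n - 1)))"

end

theory Submission
  imports Defs
begin
lemma exp_aux: fixes x::real assumes "0 \<le> x" shows "2*x*exp x \<le> exp (2*x) - 1"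
proof -
  let ?h = "\<lambda>x::real. exp (2*x) - 1 - 2*x*exp x"
  have "?h 0 \<le> ?h x"
  proof (rule DERIV_nonneg_imp_nondecreasing[OF assms])
    fix t::real assume t: "0 \<le> t" "t \<le> x"
    have d: "(?h has_real_derivative (exp (2*t) * 2 - (2 * exp t + 2*t*exp t))) (at t)"
      by (rule derivative_eq_intros refl | simp)+
    have "exp (2*t) = exp t * exp t" by (simp add: mult_exp_exp)
    hence eq: "exp (2*t) * 2 - (2 * exp t + 2*t*exp t) = 2 * exp t * (exp t - 1 - t)"
      by (simp add: algebra_simps)
    have "1 + t \<le> exp t" by (rule exp_ge_add_one_self)
    hence "0 \<le> exp t - 1 - t" by linarith
    hence "0 \<le> 2 * exp t * (exp t - 1 - t)" by (intro mult_nonneg_nonneg) auto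
    with d eq show "\<exists>y. (?h has_real_derivative y) (at t) \<and> 0 \<le> y" by metis
  qed
  then show ?thesis by simp
qed
lemma exp_ineq: fixes t::real assumes "0 \<le> t" shows "t * exp (t/4) \<le> exp t - 1"
proof -
  have "t * exp (t/2) \<le> exp t - 1" using exp_aux[of "t/2"] assms by simp
  moreover have "exp (t/4) \<le> exp (t/2)" using assms by simp
  ultimately show ?thesis using assms by (smt (verit) mult_left_mono)
qed

lemma final_alg:
  fixes X Y a t :: real
  assumes X: "0 \<le> X" and Y: "0 \<le> Y" and a: "0 \<le> a" and t: "0 < t"
    and h: "X^2 \<le> Y^2 + t*a*(X+Y)"
  shows "X^2 \<le> exp t * Y^2 + exp (0.75 * t) * t * a^2"
proof -
  have XY: "X \<le> Y + t*a"
  proof (rule ccontr)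
    assume "\<not> ?thesis"
    hence g: "X > Y + t*a" by simp
    have ta: "0 \<le> t*a" using t a by simp
    have "X*(X - t*a) > (Y+t*a)*Y"
      using g ta Y by (intro mult_strict_mono') auto
    then show False using h by (simp add: power2_eq_square algebra_simps)
  qed
  define d where "d = exp t - 1"
  have d0: "d > 0" using t by (simp add: d_def)
  have c1: "X^2 \<le> (Y + t*a)^2" using XY X by (simp add: power_mono)
  have c2: "(Y + t*a)^2 = Y^2 + 2*t*a*Y + t^2*a^2" by (simp add: power2_eq_square algebra_simps)
  have c3: "2*t*a*Y \<le> d*Y^2 + t^2/d*a^2"
  proof -
    have "0 \<le> (d*Y - t*a)^2 / d" using d0 by simp
    also have "\<dots> = d*Y^2 + t^2/d*a^2 - 2*t*a*Y" using d0
      by (simp add: power2_eq_square field_simps)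
    finally show ?thesis by simp
  qed
  have c4: "t^2 / d + t^2 \<le> exp (0.75*t) * t"
  proof -
    have e: "t * exp (t/4) \<le> d" using exp_ineq[of t] t by (simp add: d_def)
    have "t * exp t = (t * exp (t/4)) * exp (0.75*t)" by (simp add: mult_exp_exp)
    also have "\<dots> \<le> d * exp (0.75*t)" using e by simp
    finally have f: "t * exp t \<le> d * exp (0.75*t)" .
    have "d + 1 = exp t" by (simp add: d_def)
    hence "t*t * (d+1) \<le> d * (exp (0.75*t) * t)" using f t
      by (metis mult.assoc mult.commute mult_left_mono less_imp_le)
    thus ?thesis using d0 by (simp add: field_simps power2_eq_square)
  qed
  have c5: "(t^2 / d + t^2) * a^2 \<le> exp (0.75*t) * t * a^2" using c4 by (intro mult_right_mono) auto
  have c6: "Y^2 + d*Y^2 = exp t * Y^2" by (simp add: d_def algebra_simps)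
  have "t^2/d*a^2 + t^2*a^2 = (t^2 / d + t^2) * a^2" by (simp add: algebra_simps)
  show ?thesis using c1 c2 c3 c5 c6 \<open>t^2/d*a^2 + t^2*a^2 = _\<close> by linarith
qed

lemma cs_R:
  fixes R :: "'a::real_inner \<Rightarrow> 'a"
  assumes lR: "linear R" and sR: "\<And>x z. inner (R x) z = inner x (R z)"
    and Rge: "\<And>x. inner x x \<le> inner (R x) x"
  shows "inner (R x) z \<le> sqrt (inner (R x) x) * sqrt (inner (R z) z)"
proof -
  have x0: "0 \<le> inner (R x) x" using Rge[of x] by (meson inner_ge_zero order_trans)
  have z0: "0 \<le> inner (R z) z" using Rge[of z] by (meson inner_ge_zero order_trans)
  define s where "s = sqrt (inner (R x) x)"
  define t where "t = sqrt (inner (R z) z)"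
  have ss: "s * s = inner (R x) x" using x0 by (simp add: s_def)
  have tt: "t * t = inner (R z) z" using z0 by (simp add: t_def)
  have s0: "0 \<le> s" "0 \<le> t" using x0 z0 by (simp_all add: s_def t_def)
  show ?thesis
  proof (cases "s = 0 \<or> t = 0")
    case True
    then show ?thesis
    proof
      assume "s = 0"
      hence "inner x x \<le> 0" using ss Rge[of x] by simp
      hence "x = 0" by (metis inner_eq_zero_iff inner_ge_zero order_antisym)
      thus ?thesis using lR by (simp add: linear_0 s_def)
    next
      assume "t = 0"
      hence "inner z z \<le> 0" using tt Rge[of z] by simp
      hence "z = 0" by (metis inner_eq_zero_iff inner_ge_zero order_antisym)
      thus ?thesis by (simp add: t_def)
    qed
  next
    case False
    hence pos: "0 < s * t" using s0 by simp
    have sym1: "inner (R z) x = inner (R x) z" using sR[of z x] by (simp add: inner_commute)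
    have "0 \<le> inner (R (t *\<^sub>R x - s *\<^sub>R z)) (t *\<^sub>R x - s *\<^sub>R z)"
      using Rge[of "t *\<^sub>R x - s *\<^sub>R z"] by (meson inner_ge_zero order_trans)
    also have "\<dots> = t * t * inner (R x) x - 2 * (s * t) * inner (R x) z + s * s * inner (R z) z"
      by (simp add: linear_diff[OF lR] linear_scale[OF lR] inner_diff_left inner_diff_right sym1 algebra_simps)
    also have "\<dots> = 2 * (s*t) * (s*t - inner (R x) z)"
      by (simp add: ss[symmetric] tt[symmetric] algebra_simps)
    finally have "0 \<le> s*t - inner (R x) z" using pos by (simp add: zero_le_mult_iff)
    thus ?thesis by (simp add: s_def t_def)
  qed
qed

lemma energy_id:
  fixes R A :: "'a::real_inner \<Rightarrow> 'a" and p q r \<phi> :: 'a and \<tau> :: real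
  assumes lR: "linear R" and lA: "linear A"
    and sR: "\<And>x z. inner (R x) z = inner x (R z)"
    and sA: "\<And>x z. inner (A x) z = inner x (A z)"
    and tau: "\<tau> \<noteq> 0"
    and ph: "\<phi> = (1/\<tau>^2) *\<^sub>R R (p - 2 *\<^sub>R q + r) + (1/4) *\<^sub>R A (p - 2 *\<^sub>R q + r) + A q"
  shows "inner (A ((1/2) *\<^sub>R (p+q))) ((1/2) *\<^sub>R (p+q)) + inner (R ((1/\<tau>) *\<^sub>R (p-q))) ((1/\<tau>) *\<^sub>R (p-q))
       = inner (A ((1/2) *\<^sub>R (q+r))) ((1/2) *\<^sub>R (q+r)) + inner (R ((1/\<tau>) *\<^sub>R (q-r))) ((1/\<tau>) *\<^sub>R (q-r))
         + inner \<phi> (p - r)"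
proof -
  have i1: "inner x (R z) = inner (R x) z" for x z using sR by simp
  have i2: "inner x (A z) = inner (A x) z" for x z using sA by simp
  have r1: "inner (R q) p = inner (R p) q" "inner (R r) p = inner (R p) r" "inner (R r) q = inner (R q) r"
    using sR by (simp_all add: inner_commute)
  have a1: "inner (A q) p = inner (A p) q" "inner (A r) p = inner (A p) r" "inner (A r) q = inner (A q) r"
    using sA by (simp_all add: inner_commute)
  show ?thesis
    unfolding ph
    by (simp add: linear_add[OF lR] linear_diff[OF lR] linear_scale[OF lR]
        linear_add[OF lA] linear_diff[OF lA] linear_scale[OF lA]
        inner_add_left inner_add_right inner_diff_left inner_diff_right i1 i2 r1 a1
        field_simps power2_eq_square tau)
qed


theorem theorem4:
  fixes A1 A2 :: "'a::euclidean_space \<Rightarrow> 'a"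
    and \<sigma> \<tau> :: real
    and y \<phi> :: "nat \<Rightarrow> 'a"
  assumes lin1: "linear A1" and lin2: "linear A2"
    and adj: "A1 = adjoint A2"
    and A_sa: "adjoint (\<lambda>v. A1 v + A2 v) = (\<lambda>v. A1 v + A2 v)"
    and A_pos: "pos_def_op (\<lambda>v. A1 v + A2 v)"
    and sigma: "\<sigma> \<ge> 1/4" and tau: "\<tau> > 0"
    and scheme: "\<And>n. n \<ge> 1 \<Longrightarrow>
        G_op \<sigma> \<tau> A1 A2 ((1 / \<tau>^2) *\<^sub>R (y (n+1) - 2 *\<^sub>R y n + y (n - 1)))
          + (A1 (y n) + A2 (y n)) = \<phi> n"
  shows "adjoint (R_op \<sigma> \<tau> A1 A2) = R_op \<sigma> \<tau> A1 A2
       \<and> op_ge (R_op \<sigma> \<tau> A1 A2) id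
       \<and> (\<forall>n\<ge>1. energy \<sigma> \<tau> A1 A2 y (n+1)
              \<le> exp \<tau> * energy \<sigma> \<tau> A1 A2 y n
                + exp (0.75 * \<tau>) * \<tau> * sqnorm_op (inv (R_op \<sigma> \<tau> A1 A2)) (\<phi> n))"
proof -
  define A where "A = (\<lambda>v. A1 v + A2 v)"
  define R where "R = R_op \<sigma> \<tau> A1 A2"
  define c1 where "c1 = (\<sigma> - 1/4) * \<tau>^2"
  define c2 where "c2 = \<sigma>^2 * \<tau>^4"
  have c1: "0 \<le> c1" using sigma by (simp add: c1_def)
  have lA: "linear A" unfolding A_def using lin1 lin2 by (rule linear_compose_add)
  have a12: "inner (A1 x) z = inner x (A2 z)" for x z
    using adjoint_works[OF lin2, of z x] adj by (simp add: inner_commute)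
  have sA: "inner (A x) z = inner x (A z)" for x z
    using a12[of x z] a12[of z x] by (simp add: A_def inner_add_left inner_add_right inner_commute)
  have Rdef: "R x = x + c1 *\<^sub>R A x + c2 *\<^sub>R A1 (A2 x)" for x
    by (simp add: R_def R_op_def A_def c1_def c2_def)
  have lR: "linear R"
  proof (rule linearI)
    fix x z show "R (x + z) = R x + R z"
      by (simp add: Rdef linear_add[OF lA] linear_add[OF lin1] linear_add[OF lin2] algebra_simps)
  next
    fix c x show "R (c *\<^sub>R x) = c *\<^sub>R R x"
      by (simp add: Rdef linear_scale[OF lA] linear_scale[OF lin1] linear_scale[OF lin2] algebra_simps)
  qed
  have Rin: "inner (R x) z = inner x z + c1 * inner (A x) z + c2 * inner (A2 x) (A2 z)" for x z
    by (simp add: Rdef inner_add_left a12)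
  have sR: "inner (R x) z = inner x (R z)" for x z
    using Rin[of x z] Rin[of z x] sA[of x z] by (simp add: inner_commute)
  have Apos: "0 \<le> inner (A x) x" for x
  proof (cases "x = 0")
    case True thus ?thesis using lA by (simp add: linear_0)
  next
    case False thus ?thesis using A_pos by (simp add: pos_def_op_def A_def less_imp_le)
  qed
  have Rge: "inner x x \<le> inner (R x) x" for x
    using Rin[of x x] Apos[of x] c1 by (simp add: c2_def)
  have part1: "adjoint R = R"
    by (rule adjoint_unique) (simp add: sR)
  have part2: "op_ge R id" by (simp add: op_ge_def Rge)
  have injR: "inj R"
  proof (rule injI)
    fix x z assume "R x = R z"
    hence "R (x - z) = 0" by (simp add: linear_diff[OF lR])
    hence "inner (x - z) (x - z) \<le> 0" using Rge[of "x - z"] by simp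
    hence "x - z = 0" by (metis inner_eq_zero_iff inner_ge_zero order_antisym)
    thus "x = z" by simp
  qed
  have surjR: "surj R" using lR injR by (rule eucl.linear_inj_imp_surj)
  have Gx: "G_op \<sigma> \<tau> A1 A2 x = R x + (\<tau>^2/4) *\<^sub>R A x" for x
    by (simp add: G_op_def Let_def Rdef c1_def c2_def A_def linear_add[OF lin1] linear_scale[OF lin1]
        algebra_simps power2_eq_square power4_eq_xxxx)
  have part3: "energy \<sigma> \<tau> A1 A2 y (n+1) \<le> exp \<tau> * energy \<sigma> \<tau> A1 A2 y n
                + exp (0.75 * \<tau>) * \<tau> * sqnorm_op (inv R) (\<phi> n)" if n: "n \<ge> 1" for n
  proof -
    define p where "p = y (n+1)"
    define q where "q = y n"
    define r where "r = y (n - 1)"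
    define D where "D = p - 2 *\<^sub>R q + r"
    have sc: "(\<tau>^2/4) *\<^sub>R A ((1/\<tau>^2) *\<^sub>R D) = (1/4) *\<^sub>R A D"
      using tau by (simp add: linear_scale[OF lA])
    have "\<phi> n = G_op \<sigma> \<tau> A1 A2 ((1/\<tau>^2) *\<^sub>R D) + A q"
      using scheme[OF n] by (simp add: D_def p_def q_def r_def A_def)
    also have "\<dots> = (1/\<tau>^2) *\<^sub>R R D + (1/4) *\<^sub>R A D + A q"
      by (simp only: Gx sc linear_scale[OF lR])
    finally have ph: "\<phi> n = (1/\<tau>^2) *\<^sub>R R D + (1/4) *\<^sub>R A D + A q" .
    define v where "v = (1/\<tau>) *\<^sub>R (p - q)"
    define u where "u = (1/\<tau>) *\<^sub>R (q - r)"
    define E1 where "E1 = energy \<sigma> \<tau> A1 A2 y (n+1)"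
    define E0 where "E0 = energy \<sigma> \<tau> A1 A2 y n"
    have E1: "E1 = inner (A ((1/2) *\<^sub>R (p+q))) ((1/2) *\<^sub>R (p+q)) + inner (R v) v"
      by (simp add: E1_def energy_def sqnorm_op_def A_def R_def p_def q_def v_def)
    have E0: "E0 = inner (A ((1/2) *\<^sub>R (q+r))) ((1/2) *\<^sub>R (q+r)) + inner (R u) u"
      by (simp add: E0_def energy_def sqnorm_op_def A_def R_def r_def q_def u_def)
    have id: "E1 = E0 + inner (\<phi> n) (p - r)"
      unfolding E1 E0 v_def u_def
      by (rule energy_id[OF lR lA sR sA _ ph[unfolded D_def]]) (use tau in simp)
    define w where "w = inv R (\<phi> n)"
    have Rw: "R w = \<phi> n" using surjR by (simp add: w_def surj_f_inv_f)
    have pr: "p - r = \<tau> *\<^sub>R v + \<tau> *\<^sub>R u" using tau by (simp add: v_def u_def algebra_simps)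
    define a where "a = sqrt (inner (R w) w)"
    have Bw: "0 \<le> inner (R w) w" using Rge[of w] by (meson inner_ge_zero order_trans)
    have sq: "sqnorm_op (inv R) (\<phi> n) = a^2"
    proof -
      have "sqnorm_op (inv R) (\<phi> n) = inner w (R w)" by (simp add: sqnorm_op_def w_def[symmetric] Rw)
      also have "\<dots> = inner (R w) w" by (simp add: inner_commute)
      finally show ?thesis using Bw by (simp add: a_def)
    qed
    have Bv: "0 \<le> inner (R v) v" using Rge[of v] by (meson inner_ge_zero order_trans)
    have Bu: "0 \<le> inner (R u) u" using Rge[of u] by (meson inner_ge_zero order_trans)
    have E1v: "inner (R v) v \<le> E1" using E1 Apos[of "(1/2) *\<^sub>R (p+q)"] by linarith
    have E0u: "inner (R u) u \<le> E0" using E0 Apos[of "(1/2) *\<^sub>R (q+r)"] by linarith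
    have E1p: "0 \<le> E1" and E0p: "0 \<le> E0" using E1v E0u Bv Bu by linarith+
    have cv: "inner (R w) v \<le> a * sqrt E1"
      using cs_R[OF lR sR Rge, of w v] E1v unfolding a_def
      by (smt (verit) Bw mult_left_mono real_sqrt_ge_zero real_sqrt_le_mono)
    have cu: "inner (R w) u \<le> a * sqrt E0"
      using cs_R[OF lR sR Rge, of w u] E0u unfolding a_def
      by (smt (verit) Bw mult_left_mono real_sqrt_ge_zero real_sqrt_le_mono)
    have "E1 = E0 + \<tau> * inner (R w) v + \<tau> * inner (R w) u"
      using id by (simp add: pr Rw inner_add_right)
    also have "\<dots> \<le> E0 + \<tau> * (a * sqrt E1) + \<tau> * (a * sqrt E0)"
      using cv cu tau by (smt (verit) mult_left_mono)
    finally have h: "(sqrt E1)^2 \<le> (sqrt E0)^2 + \<tau> * a * (sqrt E1 + sqrt E0)"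
      using E1p E0p by (simp add: algebra_simps)
    have "(sqrt E1)^2 \<le> exp \<tau> * (sqrt E0)^2 + exp (0.75 * \<tau>) * \<tau> * a^2"
      by (rule final_alg[OF _ _ _ tau h]) (simp_all add: a_def E1p E0p Bw)
    thus ?thesis using E1p E0p sq by (simp add: E1_def E0_def)
  qed
  show ?thesis using part1 part2 part3 by (simp add: R_def)
qed

end
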